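(* Let $E(z)=A(z)-iB(z)$ be a Hermite-Biehler function with no real zeros and suppose that $AB\notin \mathcal{H}(E^2)$. Let $\{s_n\}$ be the real zeros of $A(z)$ and, for every $n$, let $P_n(z)=\frac{A(z)^2}{(z-s_n)^2}$ and $Q_n(z)=\frac{A(z)^2}{(z-s_n)}$. Then, if $s_k\neq s_l$, we have \begin{equation*} \langle P_k,P_l \rangle_{E^2} = -\bigg( \frac{A'(s_k)}{B(s_k)} + \frac{A'(s_l)}{B(s_l)}\bigg)\frac{\pi}{2(s_k-s_l)^2} \end{equation*} and \begin{equation*} \langle Q_k,Q_l\rangle_{E^2} = 0. \end{equation*} We also have \begin{equation*} \|P_k\|^2_{E^2} = -\frac{\pi}{2}\bigg( \frac{A'(s_k)^3}{B(s_k)^3} + \frac{1}{6}\frac{\partial^3}{\partial z^3}\frac{A(z)}{B(z)}\bigg|_{z=s_k}\bigg) \end{equation*} and \begin{equation*} \|Q_k\|^2_{E^2} = -\frac{\pi}{2}\frac{A'(s_k)}{B(s_k)}. \end{equation*}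
   Context: A Hermite-Biehler function is an entire $E$ with $|E(\overline{z})|<|E(z)|$ for $\operatorname{Im} z>0$; its companion functions are the real entire functions $A(z)=\frac12\{E(z)+\overline{E(\overline{z})}\}$ and $B(z)=\frac{i}{2}\{E(z)-\overline{E(\overline{z})}\}$, so $E=A-iB$. The points $s_n$ (indexed by $n\in\mathbb{Z}$) are those real points where the phase $\varphi$ of $E$ (defined by $e^{i\varphi(x)}E(x)\in\mathbb{R}$) satisfies $\varphi(s_n)=\pi/2+n\pi$; since $E$ has no real zeros these are exactly the (simple) real zeros of $A$. $\mathcal{H}(E^2)$ denotes the de Branges space of entire functions $F$ such that $F/E^2$ and $\overline{F(\overline{z})}/E^2$ have bounded type in the upper half-plane with non-positive mean type and $\int_\mathbb{R}|F(x)/E(x)^2|^2\,dx<\infty$, with inner product $\langle F,G\rangle_{E^2}=\int_{\mathbb{R}} F(x)\overline{G(x)}\,|E(x)|^{-4}\,dx$ and norm $\|\cdot\|_{E^2}$. Note $P_n,Q_n\in\mathcal{H}(E^2)$ for all $n$. *)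

theory Defs
  imports "HOL-Analysis.Analysis"
begin

definition hermite_biehler :: "(complex \<Rightarrow> complex) \<Rightarrow> bool" where
  "hermite_biehler E \<longleftrightarrow> E holomorphic_on UNIV \<and>
     (\<forall>z. Im z > 0 \<longrightarrow> norm (E (cnj z)) < norm (E z))"

definition compA :: "(complex \<Rightarrow> complex) \<Rightarrow> complex \<Rightarrow> complex" where
  "compA E z = (E z + cnj (E (cnj z))) / 2"

definition compB :: "(complex \<Rightarrow> complex) \<Rightarrow> complex \<Rightarrow> complex" where
  "compB E z = (\<i> / 2) * (E z - cnj (E (cnj z)))"

definition UHP :: "complex set" where
  "UHP = {z. Im z > 0}"

definition bounded_type_UHP :: "(complex \<Rightarrow> complex) \<Rightarrow> bool" where
  "bounded_type_UHP f \<longleftrightarrow>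
     (\<exists>g h. g holomorphic_on UHP \<and> h holomorphic_on UHP \<and>
            bounded (g ` UHP) \<and> bounded (h ` UHP) \<and> (\<exists>z\<in>UHP. h z \<noteq> 0) \<and>
            (\<forall>z\<in>UHP. f z * h z = g z))"

definition log_norm :: "complex \<Rightarrow> ereal" where
  "log_norm w = (if w = 0 then -\<infinity> else ereal (ln (norm w)))"

definition mean_type :: "(complex \<Rightarrow> complex) \<Rightarrow> ereal" where
  "mean_type f = Limsup at_top (\<lambda>y::real. log_norm (f (\<i> * of_real y)) / ereal y)"

definition sharp :: "(complex \<Rightarrow> complex) \<Rightarrow> complex \<Rightarrow> complex" where
  "sharp F z = cnj (F (cnj z))"

definition in_H_E2 :: "(complex \<Rightarrow> complex) \<Rightarrow> (complex \<Rightarrow> complex) \<Rightarrow> bool" where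
  "in_H_E2 E F \<longleftrightarrow> F holomorphic_on UNIV \<and>
     bounded_type_UHP (\<lambda>z. F z / (E z)^2) \<and> mean_type (\<lambda>z. F z / (E z)^2) \<le> 0 \<and>
     bounded_type_UHP (\<lambda>z. sharp F z / (E z)^2) \<and> mean_type (\<lambda>z. sharp F z / (E z)^2) \<le> 0 \<and>
     integrable lborel (\<lambda>x::real. (norm (F (of_real x) / (E (of_real x))^2))^2)"

definition inner_E2 :: "(complex \<Rightarrow> complex) \<Rightarrow> (complex \<Rightarrow> complex) \<Rightarrow> (complex \<Rightarrow> complex) \<Rightarrow> complex" where
  "inner_E2 E F G = integral\<^sup>L lborel
     (\<lambda>x::real. F (of_real x) * cnj (G (of_real x)) / complex_of_real ((norm (E (of_real x)))^4))"

definition norm_E2 :: "(complex \<Rightarrow> complex) \<Rightarrow> (complex \<Rightarrow> complex) \<Rightarrow> real" where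
  "norm_E2 E F = sqrt (integral\<^sup>L lborel (\<lambda>x::real. (norm (F (of_real x)))^2 / (norm (E (of_real x)))^4))"

text \<open>The functions P_n and Q_n (entire; value at the removable singularity filled in).\<close>
definition Pfun :: "(complex \<Rightarrow> complex) \<Rightarrow> real \<Rightarrow> complex \<Rightarrow> complex" where
  "Pfun E s z = (if z = of_real s then (deriv (compA E) (of_real s))^2
                 else (compA E z)^2 / (z - of_real s)^2)"

definition Qfun :: "(complex \<Rightarrow> complex) \<Rightarrow> real \<Rightarrow> complex \<Rightarrow> complex" where
  "Qfun E s z = (if z = of_real s then 0 else (compA E z)^2 / (z - of_real s))"

end

theory Submission
  imports Defs "HOL-Complex_Analysis.Complex_Analysis" "HOL-Probability.Sinc_Integral"
begin


lemma keyRe: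
  fixes A e e' :: complex
  assumes "e \<noteq> 0" "e' \<noteq> 0" "e + e' = 2 * A"
  shows "(A/e + (A/e)^2 + (A/e' + (A/e')^2)) / 4 = A^4 / (e * e')^2"
proof -
  have e': "e' = 2 * A - e" using assms(3) by (simp add: algebra_simps)
  show ?thesis using assms(1,2) unfolding e' by (simp add: field_simps) (simp add: algebra_simps power2_eq_square power4_eq_xxxx)
qed

lemma alg_w:
  fixes f :: complex
  assumes "f - \<i> \<noteq> 0"
  shows "(f/(f - \<i>) + (f/(f - \<i>))^2) / 2 = (\<i>/2) * (f + f^3) + (\<i>/2) * f^4 * (f - 2*\<i>) / (1 + \<i>*f)^2"
proof -
  have n: "1 + \<i>*f \<noteq> 0"
  proof
    assume "1 + \<i>*f = 0"
    then have "\<i> * (f - \<i>) = 0" by (simp add: algebra_simps)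
    then show False using assms by simp
  qed
  show ?thesis using assms n by (simp add: field_simps) (simp add: algebra_simps power2_eq_square power3_eq_cube power4_eq_xxxx)
qed

lemma alg_QQ:
  fixes A e tk tl :: complex
  assumes "tk \<noteq> 0" "tl \<noteq> 0" "e \<noteq> 0" "tl - tk \<noteq> 0"
  shows "((A/tk/e - A/tl/e)/(tl - tk) + (A/tk/e)*(A/tl/e))/2 = (A/e + (A/e)^2)/(2*(tk*tl))"
  using assms by (simp add: field_simps) (simp add: algebra_simps power2_eq_square)

lemma alg_PP0:
  fixes al p q d ak alp :: complex
  assumes d: "d \<noteq> 0" and pq: "p - q = d*p*q"
  shows "(((al*p - \<i>*ak)*p + (al*q - \<i>*alp)*q)/d^2 - 2*(al*p - al*q)/d^3 + ((al*p - al*q)/d)^2)/2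
       = (al + al^2)*(p^2*q^2)/2 + (- (\<i>*ak/(2*d^2))*p - (\<i>*alp/(2*d^2))*q)"
proof -
  have h1: "al*p - al*q = al*(d*p*q)" using pq by (metis right_diff_distrib)
  have s1: "2*(al*p - al*q)/d^3 = (2*al*p*q)/d^2"
    unfolding h1 using d by (simp add: eval_nat_numeral)
  have "(p - q)*(p - q) = (d*p*q)*(d*p*q)" using pq by simp
  then have h0: "p*p + q*q - 2*p*q = d*d*p*p*q*q" by (simp add: algebra_simps)
  have h2: "al*(p*p) + al*(q*q) - 2*al*p*q = al*(d*d*p*p*q*q)"
    using arg_cong[where f="\<lambda>x. al*x", OF h0] by (simp add: algebra_simps)
  have s2: "((al*p - \<i>*ak)*p + (al*q - \<i>*alp)*q) - 2*al*p*q = al*(d*d*p*p*q*q) - \<i>*(ak*p + alp*q)"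
    using h2 by (simp add: algebra_simps)
  have "(((al*p - \<i>*ak)*p + (al*q - \<i>*alp)*q)/d^2 - 2*(al*p - al*q)/d^3 + ((al*p - al*q)/d)^2)/2
      = ((((al*p - \<i>*ak)*p + (al*q - \<i>*alp)*q) - 2*al*p*q)/d^2 + ((al*p - al*q)/d)^2)/2"
    unfolding s1 by (simp add: diff_divide_distrib)
  also have "\<dots> = ((al*(d*d*p*p*q*q) - \<i>*(ak*p + alp*q))/d^2 + ((al*p - al*q)/d)^2)/2"
    unfolding s2 ..
  also have "\<dots> = ((al*(d*d*p*p*q*q) - \<i>*(ak*p + alp*q))/d^2 + (al*(d*p*q)/d)^2)/2"
    unfolding h1 ..
  also have "\<dots> = (al + al^2)*(p^2*q^2)/2 + (- (\<i>*ak/(2*d^2))*p - (\<i>*alp/(2*d^2))*q)"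
    using d by (simp add: field_simps eval_nat_numeral)
  finally show ?thesis .
qed

lemma alg_PP:
  fixes A e tk tl ak al :: complex
  assumes "tk \<noteq> 0" "tl \<noteq> 0" "e \<noteq> 0" "tl - tk \<noteq> 0"
  shows "((((A/tk/e) - \<i>*ak)/tk + ((A/tl/e) - \<i>*al)/tl)/(tl - tk)^2 - 2*((A/tk/e) - (A/tl/e))/(tl - tk)^3
           + ((A/tk/e - A/tl/e)/(tl - tk))^2)/2
       = (A/e + (A/e)^2)/(2*(tk^2*tl^2)) + (- (\<i>*ak/(2*(tl-tk)^2))/tk - (\<i>*al/(2*(tl-tk)^2))/tl)"
proof -
  define p q where "p = 1/tk" "q = 1/tl"
  have pq: "p - q = (tl - tk)*p*q" using assms unfolding p_q_def by (simp add: field_simps)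
  have e1: "A/tk/e = (A/e)*p" "A/tl/e = (A/e)*q" "x/tk = x*p" "x/tl = x*q" for x
    unfolding p_q_def by (simp_all add: field_simps)
  have e2: "(A/e + (A/e)^2)/(2*(tk^2*tl^2)) = (A/e + (A/e)^2)*(p^2*q^2)/2"
    unfolding p_q_def by (simp add: field_simps)
  show ?thesis
    unfolding e2 e1 using alg_PP0[OF assms(4) pq, of "A/e" ak al] by simp
qed

lemma alg_P:
  fixes t a b c u4 :: complex
  assumes t: "t \<noteq> 0" and ff: "f - \<i> \<noteq> 0"
    and that: "u3 = c + t*u4" "u2 = b + t*u3" "u1 = a + t*u2" "f = t*u1"
  shows "(f/(f - \<i>) + (f/(f - \<i>))^2)/(2*t^4)
       = (\<i>/2)*(u4 + 3*a^2*u2 + 3*a*t*u2^2 + t^2*u2^3) + (\<i>/2)*u1^4*(f - 2*\<i>)/(1 + \<i>*f)^2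
         + (\<i>/2)*(a/t^3 + b/t^2 + (c + a^3)/t)"
proof -
  have p: "f + f^3 = a*t + b*t^2 + (c + a^3)*t^3 + t^4*(u4 + 3*a^2*u2 + 3*a*t*u2^2 + t^2*u2^3)"
    using that by (simp add: algebra_simps power2_eq_square power3_eq_cube power4_eq_xxxx)
  have q: "f^4 = t^4 * u1^4" using that by (simp add: power_mult_distrib)
  have "(f/(f - \<i>) + (f/(f - \<i>))^2)/(2*t^4) = ((f/(f - \<i>) + (f/(f - \<i>))^2)/2) / t^4"
    by simp
  also have "\<dots> = ((\<i>/2) * (f + f^3) + (\<i>/2) * f^4 * (f - 2*\<i>) / (1 + \<i>*f)^2) / t^4"
    by (simp only: alg_w[OF ff])
  also have "\<dots> = ((\<i>/2) * (a*t + b*t^2 + (c + a^3)*t^3 + t^4*(u4 + 3*a^2*u2 + 3*a*t*u2^2 + t^2*u2^3))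
        + (\<i>/2) * (t^4 * u1^4) * (f - 2*\<i>) / (1 + \<i>*f)^2) / t^4"
    by (simp only: p q)
  also have "\<dots> = (\<i>/2)*(u4 + 3*a^2*u2 + 3*a*t*u2^2 + t^2*u2^3) + (\<i>/2)*u1^4*(f - 2*\<i>)/(1 + \<i>*f)^2
         + (\<i>/2)*(a/t^3 + b/t^2 + (c + a^3)/t)"
    using t by (simp add: field_simps) (simp add: algebra_simps eval_nat_numeral)
  finally show ?thesis .
qed

lemma alg_QN:
  fixes A e t a X :: complex
  assumes "t \<noteq> 0" "e \<noteq> 0"
  shows "((A/t/e - \<i>*a)/t)/2 + (A/t/e)^2/2 + X = (A/e + (A/e)^2)/(2*t^2) + (- (\<i>*a/2)/t) + X"
  using assms by (simp add: field_simps power2_eq_square)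

lemma alg_QNb:
  fixes W t u a :: complex
  assumes "t \<noteq> 0" "u \<noteq> 0"
  shows "W/t^2 + (- (\<i>*a/2)/t) + \<i>*(a/2)/u = W*(1/t)*(1/t) + (- (\<i>*a/2*(u - t)))*(1/u)*(1/t)"
  using assms by (simp add: field_simps power2_eq_square)

lemma alg_PPb:
  fixes W tk tl u ak al D2 :: complex
  assumes "tk \<noteq> 0" "tl \<noteq> 0" "u \<noteq> 0" "D2 \<noteq> 0"
  shows "W/(tk^2*tl^2) + (- (\<i>*ak/D2)/tk - (\<i>*al/D2)/tl) + \<i>*((ak+al)/D2)/u
     = W*(1/tk)*(1/tk)*(1/tl)*(1/tl) + (- (\<i>*ak/D2*(u - tk)))*(1/u)*(1/tk) + (- (\<i>*al/D2*(u - tl)))*(1/u)*(1/tl)"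
  using assms by (simp add: field_simps power2_eq_square)

lemma alg_PNb:
  fixes W t u a b c3 :: complex
  assumes "t \<noteq> 0" "u \<noteq> 0"
  shows "W/t^4 - (\<i>/2)*(a/t^3 + b/t^2 + (c3 + a^3)/t) + \<i>*((c3 + a^3)/2)/u
     = W*(1/t)*(1/t)*(1/t)*(1/t) + (-(\<i>/2)*a)*(1/t)*(1/t)*(1/t) + (-(\<i>/2)*b)*(1/t)*(1/t)
       + (-(\<i>*((c3 + a^3)/2)*(u - t)))*(1/u)*(1/t)"
  using assms by (simp add: field_simps eval_nat_numeral)

lemma AEf:
  fixes A B f :: complex
  assumes "B \<noteq> 0" "f = A / B" "A - \<i> * B \<noteq> 0"
  shows "A / (A - \<i> * B) = f / (f - \<i>)" "f - \<i> \<noteq> 0"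
proof -
  have eA: "A = f * B" using assms by simp
  have e2: "A - \<i> * B = B * (f - \<i>)" unfolding eA by (simp add: algebra_simps)
  show fi: "f - \<i> \<noteq> 0" using assms(1,3) e2 by auto
  show "A / (A - \<i> * B) = f / (f - \<i>)" unfolding e2 using assms(1) fi by (simp add: eA)
qed




lemma integrable_inv1sq: "integrable lborel (\<lambda>x::real. inverse (1 + x^2))"
  using integrable_inverse_1_plus_square
  by (simp add: set_integrable_def einterval_eq_UNIV)

lemma integral_inv1sq: "integral\<^sup>L lborel (\<lambda>x::real. inverse (1 + x^2)) = pi"
  using LBINT_inverse_1_plus_square
  by (simp add: interval_lebesgue_integral_def set_lebesgue_integral_def einterval_eq_UNIV)

lemma core_bound:
  fixes H :: "complex \<Rightarrow> complex"
  assumes cont: "continuous_on UNIV (\<lambda>x::real. H (of_real x))"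
    and K: "K \<ge> 0" and R0: "R0 > 0"
    and bd: "\<And>z. Im z \<ge> 0 \<Longrightarrow> norm z \<ge> R0 \<Longrightarrow> norm (H z) \<le> K / (norm z)^2"
  shows "\<exists>C. \<forall>x::real. norm (H (of_real x)) \<le> C * inverse (1 + x^2)"
proof -
  define R1 where "R1 = max R0 1"
  have "bounded ((\<lambda>x::real. H (of_real x)) ` {-R1..R1})"
    by (rule compact_imp_bounded, rule compact_continuous_image,
        rule continuous_on_subset[OF cont], auto)
  then obtain M where M0: "\<forall>y\<in>(\<lambda>x::real. H (of_real x)) ` {-R1..R1}. norm y \<le> M"
    unfolding bounded_iff by blast
  have M: "norm (H (of_real x)) \<le> M" if "x \<in> {-R1..R1}" for x
    using M0 that by blast
  define C where "C = max (M * (1 + R1^2)) (2*K)"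
  have "norm (H (of_real x)) \<le> C * inverse (1 + x^2)" for x
  proof (cases "\<bar>x\<bar> \<le> R1")
    case True
    then have "norm (H (of_real x)) \<le> M" using M[of x] by (auto simp: abs_le_iff)
    moreover have "M \<ge> 0" using M[of 0] R1_def by (smt (verit) norm_ge_zero atLeastAtMost_iff)
    moreover have "\<bar>x\<bar> \<le> \<bar>R1\<bar>" using True R1_def by auto
    then have "x^2 \<le> R1^2" by (simp add: abs_le_square_iff)
    ultimately have "M * (1 + x^2) \<le> M * (1 + R1^2)" by (intro mult_left_mono) auto
    then have "M \<le> M * (1 + R1^2) * inverse (1 + x^2)"
      by (simp add: field_simps add_pos_nonneg)
    then have "norm (H (of_real x)) \<le> M * (1 + R1^2) * inverse (1 + x^2)"
      using \<open>norm (H (of_real x)) \<le> M\<close> by linarith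
    also have "\<dots> \<le> C * inverse (1 + x^2)"
      by (intro mult_right_mono) (auto simp: C_def)
    finally show ?thesis .
  next
    case False
    then have x1: "\<bar>x\<bar> \<ge> R0" "\<bar>x\<bar> \<ge> 1" by (auto simp: R1_def)
    have "norm (H (of_real x)) \<le> K / (norm (of_real x :: complex))^2"
      by (rule bd) (use x1 in auto)
    also have "\<dots> = K / x^2" by simp
    also have "\<dots> \<le> 2*K * inverse (1 + x^2)"
    proof -
      have "\<bar>1\<bar> \<le> \<bar>x\<bar>" using x1 by simp
      then have "1^2 \<le> x^2" by (simp only: abs_le_square_iff)
      then have "1 \<le> x^2" by simp
      then have "K * (1 + x^2) \<le> (2*K) * x^2" using K using mult_left_mono[of 1 "x^2" K] by (simp add: algebra_simps)
      moreover have "x^2 > 0" using \<open>1 \<le> x^2\<close> by linarith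
      moreover have "1 + x^2 \<noteq> 0" by (smt (verit) zero_le_power2)
      ultimately have "K / x^2 = (K * (1+x^2)) / x^2 * inverse (1+x^2)"
        by simp
      also have "\<dots> \<le> ((2*K) * x^2) / x^2 * inverse (1+x^2)"
        by (intro mult_right_mono divide_right_mono) (use \<open>K * (1 + x^2) \<le> (2*K) * x^2\<close> in auto)
      also have "\<dots> = 2*K * inverse (1+x^2)" using \<open>x^2 > 0\<close> by simp
      finally show ?thesis .
    qed
    also have "\<dots> \<le> C * inverse (1 + x^2)"
      by (intro mult_right_mono) (auto simp: C_def)
    finally show ?thesis .
  qed
  then show ?thesis by blast
qed

lemma core:
  fixes H :: "complex \<Rightarrow> complex" and U :: "complex set"
  assumes U: "open U" "{z. Im z \<ge> 0} \<subseteq> U" and holH: "H holomorphic_on U"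
    and K: "K \<ge> 0" and R0: "R0 > 0"
    and bd: "\<And>z. Im z \<ge> 0 \<Longrightarrow> norm z \<ge> R0 \<Longrightarrow> norm (H z) \<le> K / (norm z)^2"
  shows "integrable lborel (\<lambda>x. H (of_real x))" "integral\<^sup>L lborel (\<lambda>x. H (of_real x)) = 0"
proof -
  have contU: "continuous_on U H" using holH holomorphic_on_imp_continuous_on by blast
  have cont: "continuous_on UNIV (\<lambda>x::real. H (of_real x))"
    by (rule continuous_on_compose2[OF contU]) (use U in \<open>auto intro!: continuous_intros\<close>)
  have meas: "(\<lambda>x::real. H (of_real x)) \<in> borel_measurable lborel"
    using borel_measurable_continuous_onI[OF cont] by simp
  obtain C where C: "\<And>x::real. norm (H (of_real x)) \<le> C * inverse (1 + x^2)"
    using core_bound[OF cont K R0 bd] by blast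
  show int: "integrable lborel (\<lambda>x. H (of_real x))"
  proof (rule Bochner_Integration.integrable_bound[OF _ meas])
    show "integrable lborel (\<lambda>x::real. C * inverse (1 + x^2))"
      using integrable_inv1sq by simp
    show "AE x in lborel. norm (H (of_real x)) \<le> norm (C * inverse (1 + x^2))"
      using C by (auto intro: order.trans[OF _ abs_ge_self])
  qed
  define g where "g = (\<lambda>x::real. H (of_real x))"
  have lim1: "((\<lambda>R. integral\<^sup>L lborel (\<lambda>x. indicator {-R..R} x *\<^sub>R g x)) \<longlongrightarrow> integral\<^sup>L lborel g) at_top"
  proof (rule integral_dominated_convergence_at_top[where w="\<lambda>x. norm (g x)"])
    show "g \<in> borel_measurable lborel" using meas g_def by simp
    show "(\<lambda>x. indicator {-R..R} x *\<^sub>R g x) \<in> borel_measurable lborel" for R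
      using meas g_def by simp
    show "integrable lborel (\<lambda>x. norm (g x))" using int g_def by simp
    show "AE x in lborel. ((\<lambda>R. indicator {-R..R} x *\<^sub>R g x) \<longlongrightarrow> g x) at_top"
    proof (rule AE_I2)
      fix x :: real
      have "eventually (\<lambda>R. indicator {-R..R} x *\<^sub>R g x = g x) at_top"
        using eventually_ge_at_top[of "\<bar>x\<bar>"] by eventually_elim (auto simp: indicator_def)
      then show "((\<lambda>R. indicator {-R..R} x *\<^sub>R g x) \<longlongrightarrow> g x) at_top"
        by (rule tendsto_eventually)
    qed
    show "\<forall>\<^sub>F R in at_top. AE x in lborel. norm (indicator {-R..R} x *\<^sub>R g x) \<le> norm (g x)"
      by (auto simp: indicator_def)
  qed
  have eq1: "integral\<^sup>L lborel (\<lambda>x. indicator {-R..R} x *\<^sub>R g x) = integral {-R..R} g" for R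
  proof -
    have "set_integrable lborel {-R..R} g"
      unfolding set_integrable_def using int g_def by (intro integrable_mult_indicator) auto
    from set_borel_integral_eq_integral(2)[OF this] show ?thesis
      by (simp add: set_lebesgue_integral_def)
  qed
  define arc where "arc = (\<lambda>R::real. part_circlepath 0 R 0 pi)"
  have eq2: "integral {-R..R} g = - contour_integral (arc R) H" if R: "R \<ge> R0" for R
  proof -
    have Rpos: "R > 0" using R R0 by simp
    have imA: "path_image (arc R) \<subseteq> {z. Im z \<ge> 0}"
      unfolding arc_def
      using Rpos by (auto simp: path_image_part_circlepath Im_exp intro!: mult_nonneg_nonneg sin_ge_zero)
    have imL: "path_image (linepath (of_real (-R)) (of_real R)) \<subseteq> {z. Im z \<ge> 0}"
      by (auto simp: closed_segment_def scaleR_conv_of_real)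
    have contA: "H contour_integrable_on (arc R)"
      unfolding arc_def
      by (rule contour_integrable_continuous_part_circlepath,
          rule continuous_on_subset[OF contU]) (use imA U arc_def in auto)
    have contL: "H contour_integrable_on (linepath (of_real (-R)) (of_real R))"
      by (rule contour_integrable_continuous_linepath,
          rule continuous_on_subset[OF contU]) (use imL U in auto)
    have join: "(H has_contour_integral
        (contour_integral (linepath (of_real (-R)) (of_real R)) H + contour_integral (arc R) H))
        (linepath (of_real (-R)) (of_real R) +++ arc R)"
      by (rule has_contour_integral_join)
         (use contA contL has_contour_integral_integral in \<open>auto simp: arc_def\<close>)
    have cauchy: "(H has_contour_integral 0) (linepath (of_real (-R)) (of_real R) +++ arc R)"
    proof (rule Cauchy_theorem_global[OF U(1) holH])
      show "valid_path (linepath (of_real (-R)) (of_real R) +++ arc R)"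
        by (auto simp: arc_def)
      show "pathfinish (linepath (of_real (-R)) (of_real R) +++ arc R) =
            pathstart (linepath (of_real (-R)) (of_real R) +++ arc R)"
        by (simp add: arc_def)
      have im: "path_image (linepath (of_real (-R)) (of_real R) +++ arc R) \<subseteq> {z. Im z \<ge> 0}"
        by (subst path_image_join) (use imA imL in \<open>auto simp: arc_def\<close>)
      then show "path_image (linepath (of_real (-R)) (of_real R) +++ arc R) \<subseteq> U"
        using U by auto
      fix w assume "w \<notin> U"
      then have "w \<notin> {z. Im z \<ge> 0}" using U by auto
      then show "winding_number (linepath (of_real (-R)) (of_real R) +++ arc R) w = 0"
        by (intro winding_number_zero_outside[OF _ convex_halfspace_Im_ge _ _ im])
           (auto simp: arc_def)
    qed
    have "contour_integral (linepath (of_real (-R)) (of_real R)) H + contour_integral (arc R) H = 0"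
      using has_contour_integral_unique[OF join cauchy] .
    moreover have "(H has_contour_integral contour_integral (linepath (of_real (-R)) (of_real R)) H)
                    (linepath (of_real (-R)) (of_real R))"
      using contL has_contour_integral_integral by blast
    then have "(g has_integral contour_integral (linepath (of_real (-R)) (of_real R)) H) {-R..R}"
      using has_contour_integral_linepath_Reals_iff[of "of_real (-R)" "of_real R" H] Rpos g_def by simp
    ultimately show ?thesis by (simp add: integral_unique eq_neg_iff_add_eq_0)
  qed
  have lim2: "((\<lambda>R. contour_integral (arc R) H) \<longlongrightarrow> 0) at_top"
  proof (rule tendsto_sandwich[where f="\<lambda>_. 0" and h="\<lambda>R. K * pi / R", THEN tendsto_norm_zero_cancel])
    have "((\<lambda>R. K * pi * inverse R) \<longlongrightarrow> K * pi * 0) at_top"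
      by (intro tendsto_intros tendsto_inverse_0_at_top filterlim_ident)
    then show "((\<lambda>R. K * pi / R) \<longlongrightarrow> 0) at_top" by (simp add: divide_inverse)
    show "\<forall>\<^sub>F R in at_top. 0 \<le> norm (contour_integral (arc R) H)" by simp
    show "\<forall>\<^sub>F R in at_top. norm (contour_integral (arc R) H) \<le> K * pi / R"
      using eventually_ge_at_top[of R0]
    proof eventually_elim
      case (elim R)
      have Rpos: "R > 0" using elim R0 by simp
      have imA: "path_image (arc R) \<subseteq> {z. Im z \<ge> 0}"
        unfolding arc_def
        using Rpos by (auto simp: path_image_part_circlepath Im_exp intro!: mult_nonneg_nonneg sin_ge_zero)
      have contA: "H contour_integrable_on (arc R)"
        unfolding arc_def
        by (rule contour_integrable_continuous_part_circlepath,
            rule continuous_on_subset[OF contU]) (use imA U arc_def in auto)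
      have "norm (contour_integral (arc R) H) \<le> (K / R^2) * R * (pi - 0)"
        unfolding arc_def
      proof (rule has_contour_integral_bound_part_circlepath)
        show "(H has_contour_integral contour_integral (part_circlepath 0 R 0 pi) H) (part_circlepath 0 R 0 pi)"
          using contA arc_def has_contour_integral_integral by blast
        show "0 \<le> K / R^2" using K by simp
        fix x assume x: "x \<in> path_image (part_circlepath 0 R 0 pi)"
        then have "norm x = R" using in_path_image_part_circlepath[OF x] Rpos by simp
        moreover have "Im x \<ge> 0" using imA x arc_def by auto
        ultimately show "norm (H x) \<le> K / R^2" using bd[of x] elim by simp
      qed (use Rpos in auto)
      also have "\<dots> = K * pi / R" using Rpos by (simp add: power2_eq_square field_simps)
      finally show ?case .
    qed
  qed simp
  have lim3: "((\<lambda>R. integral\<^sup>L lborel (\<lambda>x. indicator {-R..R} x *\<^sub>R g x)) \<longlongrightarrow> - 0) at_top"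
  proof (rule Lim_transform_eventually[OF tendsto_minus[OF lim2]])
    show "\<forall>\<^sub>F R in at_top. - contour_integral (arc R) H = integral\<^sup>L lborel (\<lambda>x. indicator {-R..R} x *\<^sub>R g x)"
      using eventually_ge_at_top[of R0] by eventually_elim (simp add: eq1 eq2)
  qed
  have "integral\<^sup>L lborel g = - 0" using tendsto_unique[OF _ lim1 lim3] by simp
  then show "integral\<^sup>L lborel (\<lambda>x. H (of_real x)) = 0"
    using g_def by simp
qed

lemma assemble:
  fixes H2 G Pp :: "complex \<Rightarrow> complex" and F :: "real \<Rightarrow> complex" and c :: complex
  assumes U: "open U" "{z. Im z \<ge> 0} \<subseteq> U" "H2 holomorphic_on U"
    and K: "K \<ge> 0" and R0: "R0 > 0"
    and bd: "\<And>z. Im z \<ge> 0 \<Longrightarrow> norm z \<ge> R0 \<Longrightarrow> norm (H2 z) \<le> K / (norm z)^2"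
    and Fm: "F \<in> borel_measurable lborel" and S: "finite S"
    and eq: "\<And>x. x \<notin> S \<Longrightarrow> H2 (of_real x) = G (of_real x) + Pp (of_real x) + \<i> * c / (of_real x + \<i>)"
    and Pp: "\<And>x. x \<notin> S \<Longrightarrow> cnj (Pp (of_real x)) = - Pp (of_real x)"
    and c: "cnj c = c"
    and FG: "\<And>x. x \<notin> S \<Longrightarrow> F x = (G (of_real x) + cnj (G (of_real x))) / 2"
  shows "integrable lborel F" "integral\<^sup>L lborel F = - c * pi"
proof -
  have co: "integrable lborel (\<lambda>x. H2 (of_real x))" "integral\<^sup>L lborel (\<lambda>x. H2 (of_real x)) = 0"
    by (rule core(1)[OF U K R0]; rule bd; assumption) (rule core(2)[OF U K R0]; rule bd; assumption)
  define R where "R = (\<lambda>x::real. (H2 (of_real x) + cnj (H2 (of_real x))) / 2 - c * of_real (inverse (1 + x^2)))"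
  have a: "integrable lborel (\<lambda>x. H2 (of_real x) + cnj (H2 (of_real x)))"
    using Bochner_Integration.integrable_add[OF co(1) integrable_bounded_linear[OF bounded_linear_cnj co(1)]] by simp
  have b: "integrable lborel (\<lambda>x. (H2 (of_real x) + cnj (H2 (of_real x))) / 2)"
    using a by simp
  have c0: "integrable lborel (\<lambda>x::real. complex_of_real (inverse (1 + x^2)))"
    by (rule integrable_bounded_linear[OF bounded_linear_of_real integrable_inv1sq])
  have cc: "integrable lborel (\<lambda>x::real. c * complex_of_real (inverse (1 + x^2)))"
    by (rule Bochner_Integration.integrable_mult_right) (rule c0)
  have Rint: "integrable lborel R" unfolding R_def using b cc by (rule Bochner_Integration.integrable_diff)
  have i1: "integral\<^sup>L lborel (\<lambda>x. (H2 (of_real x) + cnj (H2 (of_real x))) / 2) = 0"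
    using co by (simp add: Bochner_Integration.integral_add[OF co(1) integrable_bounded_linear[OF bounded_linear_cnj co(1)]])
  have i2: "integral\<^sup>L lborel (\<lambda>x::real. complex_of_real (inverse (1 + x^2))) = of_real pi"
    by (simp only: integral_complex_of_real integral_inv1sq)
  have Rval: "integral\<^sup>L lborel R = - c * pi"
    unfolding R_def
    by (simp only: Bochner_Integration.integral_diff[OF b cc] i1 integral_mult_right_zero i2) simp
  have FR: "F x = R x" if x: "x \<notin> S" for x
  proof -
    have ne: "(of_real x + \<i>) \<noteq> 0" "(of_real x - \<i>) \<noteq> 0"
      by (auto simp: complex_eq_iff)
    have ne2: "1 + (of_real x)^2 \<noteq> (0::complex)"
    proof
      assume "1 + (of_real x)^2 = (0::complex)"
      then have "1 + x^2 = 0" by (metis of_real_1 of_real_add of_real_eq_0_iff of_real_power)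
      then show False by (smt (verit) zero_le_power2)
    qed
    have cj: "cnj (\<i> * c / (of_real x + \<i>)) = - \<i> * c / (of_real x - \<i>)"
      using c by simp
    have h: "H2 (of_real x) + cnj (H2 (of_real x)) = (G (of_real x) + cnj (G (of_real x)))
       + (\<i> * c / (of_real x + \<i>) + cnj (\<i> * c / (of_real x + \<i>)))"
      by (simp only: eq[OF x] complex_cnj_add Pp[OF x]) (simp add: algebra_simps)
    have "(H2 (of_real x) + cnj (H2 (of_real x))) / 2
       = F x + (\<i> * c / (of_real x + \<i>) - \<i> * c / (of_real x - \<i>)) / 2"
      unfolding h cj FG[OF x] by (simp add: field_simps)
    also have "(\<i> * c / (of_real x + \<i>) - \<i> * c / (of_real x - \<i>)) / 2 = c * of_real (inverse (1 + x^2))"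
    proof -
      have d: "(2::complex) + of_real x * (of_real x * 2) \<noteq> 0"
      proof -
        have "(2::complex) + of_real x * (of_real x * 2) = 2 * (1 + (of_real x)^2)"
          by (simp add: power2_eq_square algebra_simps)
        then show ?thesis using ne2 by (metis mult_eq_0_iff zero_neq_numeral)
      qed
      show ?thesis using ne ne2 d by (simp add: field_simps power2_eq_square)
    qed
    finally show ?thesis unfolding R_def by (simp add: field_simps)
  qed
  have AE: "AE x in lborel. R x = F x"
    using AE_not_in[OF finite_imp_null_set_lborel[OF S]] by eventually_elim (use FR in auto)
  show "integrable lborel F"
    by (rule integrable_cong_AE_imp[OF Rint Fm AE])
  have "integral\<^sup>L lborel F = integral\<^sup>L lborel R"
    by (rule integral_cong_AE[OF Fm borel_measurable_integrable[OF Rint]]) (use AE in \<open>auto elim: AE_mp\<close>)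
  then show "integral\<^sup>L lborel F = - c * pi" using Rval by simp
qed

lemma real_deriv_real:
  fixes f :: "complex \<Rightarrow> complex"
  assumes d: "f field_differentiable at (of_real s)" and r: "\<And>x::real. f (of_real x) \<in> \<real>"
  shows "deriv f (of_real s) \<in> \<real>"
proof -
  have "DERIV f (of_real s) :> deriv f (of_real s)"
    using d DERIV_deriv_iff_field_differentiable by blast
  then have l: "(\<lambda>h. (f (of_real s + h) - f (of_real s)) / h) \<midarrow>0\<rightarrow> deriv f (of_real s)"
    by (simp add: DERIV_def)
  have "((\<lambda>r::real. (f (of_real s + of_real r) - f (of_real s)) / of_real r) \<longlongrightarrow> deriv f (of_real s)) (at 0)"
    by (rule tendsto_compose_eventually[OF l]) (auto intro!: tendsto_eq_intros simp: eventually_at_filter)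
  moreover have "eventually (\<lambda>r::real. (f (of_real s + of_real r) - f (of_real s)) / of_real r \<in> \<real>) (at 0)"
    using r by (intro always_eventually allI) (metis Reals_diff Reals_divide Reals_of_real of_real_add)
  ultimately show ?thesis
    by (intro Lim_in_closed_set[OF closed_complex_Reals]) auto
qed

definition hq :: "(complex \<Rightarrow> complex) \<Rightarrow> complex \<Rightarrow> complex \<Rightarrow> complex" where
  "hq f a z = (if z = a then deriv f a else (f z - f a) / (z - a))"

lemma hq_holo: "f holomorphic_on S \<Longrightarrow> open S \<Longrightarrow> hq f a holomorphic_on S"
  unfolding hq_def using pole_lemma_open by blast

lemma hq_eq: "f z = f a + (z - a) * hq f a z"
  by (simp add: hq_def)

lemma hq_at: "hq f a a = deriv f a"
  by (simp add: hq_def)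

lemma hq_real:
  assumes "f field_differentiable at (of_real s)" "\<And>x::real. f (of_real x) \<in> \<real>"
  shows "hq f (of_real s) (of_real x) \<in> \<real>"
  using real_deriv_real[OF assms] assms(2)
  by (auto simp: hq_def intro!: Reals_divide Reals_diff)

lemma hb_basic:
  assumes HB: "hermite_biehler E" and noreal: "\<forall>x::real. E (of_real x) \<noteq> 0"
  shows "E holomorphic_on UNIV" "compA E holomorphic_on UNIV" "compB E holomorphic_on UNIV"
    "\<And>z. E z = compA E z - \<i> * compB E z"
    "\<And>x::real. compA E (of_real x) \<in> \<real>" "\<And>x::real. compB E (of_real x) \<in> \<real>"
    "\<And>x::real. E (of_real x) + cnj (E (of_real x)) = 2 * compA E (of_real x)"
    "\<And>z. Im z \<ge> 0 \<Longrightarrow> E z \<noteq> 0"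
    "\<And>z. Im z \<ge> 0 \<Longrightarrow> norm (compA E z) \<le> norm (E z)"
proof -
  show hE: "E holomorphic_on UNIV" using HB unfolding hermite_biehler_def by blast
  have hc: "(cnj \<circ> E \<circ> cnj) holomorphic_on UNIV"
    by (rule holomorphic_on_compose_cnj_cnj) (use hE in auto)
  then have hc': "(\<lambda>z. cnj (E (cnj z))) holomorphic_on UNIV" by (simp add: o_def)
  show "compA E holomorphic_on UNIV" unfolding compA_def[abs_def]
    by (intro holomorphic_intros hE hc') auto
  show "compB E holomorphic_on UNIV" unfolding compB_def[abs_def]
    by (intro holomorphic_intros hE hc') auto
  show "E z = compA E z - \<i> * compB E z" for z
    by (simp add: compA_def compB_def field_simps)
  show "compA E (of_real x) \<in> \<real>" for x
    by (simp add: compA_def complex_is_Real_iff)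
  show "compB E (of_real x) \<in> \<real>" for x
    by (simp add: compB_def complex_is_Real_iff)
  show "E (of_real x) + cnj (E (of_real x)) = 2 * compA E (of_real x)" for x
    by (simp add: compA_def)
  have lt: "norm (E (cnj z)) \<le> norm (E z)" if "Im z \<ge> 0" for z
  proof (cases "Im z = 0")
    case True
    then have "cnj z = z" by (simp add: complex_eq_iff)
    then show ?thesis by simp
  next
    case False
    then show ?thesis using HB that unfolding hermite_biehler_def by (auto intro: less_imp_le)
  qed
  show "E z \<noteq> 0" if "Im z \<ge> 0" for z
  proof (cases "Im z = 0")
    case True
    then have "z = of_real (Re z)" by (simp add: complex_eq_iff)
    then show ?thesis using noreal by metis
  next
    case False
    then have "norm (E (cnj z)) < norm (E z)" using HB that unfolding hermite_biehler_def by auto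
    then show ?thesis by auto
  qed
  show "norm (compA E z) \<le> norm (E z)" if "Im z \<ge> 0" for z
  proof -
    have "norm (E z + cnj (E (cnj z))) \<le> norm (E z) + norm (E (cnj z))"
      using norm_triangle_ineq[of "E z" "cnj (E (cnj z))"] by simp
    then have "norm (compA E z) \<le> (norm (E z) + norm (E (cnj z))) / 2"
      unfolding compA_def by (simp add: divide_right_mono)
    then show ?thesis using lt[OF that] by simp
  qed
qed




lemma higher_deriv_lin:
  fixes s :: complex
  shows "(deriv ^^ n) (\<lambda>z. z - s) s = (if n = 1 then 1 else 0)"
proof (cases n)
  case 0 then show ?thesis by simp
next
  case (Suc m)
  have d: "deriv (\<lambda>z. z - s) = (\<lambda>z. 1)"
    by (rule ext, rule DERIV_imp_deriv) (auto intro!: derivative_eq_intros)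
  have "(deriv ^^ Suc m) (\<lambda>z. z - s) = (deriv ^^ m) (deriv (\<lambda>z. z - s))"
    by (simp only: funpow_Suc_right o_def)
  then show ?thesis using Suc d by simp
qed

lemma third_deriv:
  fixes f u1 u2 :: "complex \<Rightarrow> complex"
  assumes V: "open V" "s \<in> V" and hol: "u1 holomorphic_on V" "u2 holomorphic_on V"
    and f: "f = (\<lambda>z. (z - s) * u1 z)" and u1: "u1 = (\<lambda>z. a + (z - s) * u2 z)"
  shows "(deriv ^^ 3) f s = 6 * deriv u2 s"
proof -
  have hl: "(\<lambda>z. z - s) holomorphic_on V" by (intro holomorphic_intros)
  have "(deriv ^^ 3) f s = (\<Sum>i = 0..3. of_nat (3 choose i) * (deriv ^^ i) (\<lambda>z. z - s) s * (deriv ^^ (3 - i)) u1 s)"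
    unfolding f by (rule higher_deriv_mult[OF hl hol(1) V])
  also have "\<dots> = 3 * (deriv ^^ 2) u1 s"
    by (simp add: higher_deriv_lin eval_nat_numeral)
  also have "(deriv ^^ 2) u1 s = (deriv ^^ 2) (\<lambda>z. a) s + (deriv ^^ 2) (\<lambda>z. (z - s) * u2 z) s"
    unfolding u1 by (rule higher_deriv_add) (auto intro!: holomorphic_intros hol V)
  also have "(deriv ^^ 2) (\<lambda>z. (z - s) * u2 z) s
      = (\<Sum>i = 0..2. of_nat (2 choose i) * (deriv ^^ i) (\<lambda>z. z - s) s * (deriv ^^ (2 - i)) u2 s)"
    by (rule higher_deriv_mult[OF hl hol(2) V])
  also have "\<dots> = 2 * deriv u2 s"
    by (simp add: higher_deriv_lin eval_nat_numeral)
  finally show ?thesis by simp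
qed

lemma inv_bd:
  fixes z p :: complex
  assumes "2 * norm p + 1 \<le> norm z"
  shows "norm (1 / (z - p)) \<le> 2 / norm z" "z \<noteq> p" "norm z \<ge> 1"
proof -
  have "norm z - norm p \<le> norm (z - p)" by (rule norm_triangle_ineq2)
  then have np: "norm z / 2 \<le> norm (z - p)" using assms by simp
  then show "z \<noteq> p" using assms by auto
  show "norm z \<ge> 1" using assms by (smt (verit) norm_ge_zero)
  have "norm z > 0" using assms by (smt (verit) norm_ge_zero)
  moreover have "norm (z - p) > 0" using np \<open>norm z > 0\<close> by linarith
  ultimately show "norm (1 / (z - p)) \<le> 2 / norm z"
    using np by (simp add: norm_divide divide_simps)
qed

lemma FG_real:
  fixes A e D :: complex
  assumes "e \<noteq> 0" "cnj A = A" "cnj D = D" "D \<noteq> 0" "e + cnj e = 2 * A"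
  shows "((A/e + (A/e)^2)/(2*D) + cnj ((A/e + (A/e)^2)/(2*D))) / 2 = A^4 / (D * (e * cnj e)^2)"
proof -
  have ce: "cnj e \<noteq> 0" using assms(1) by simp
  have "cnj ((A/e + (A/e)^2)/(2*D)) = (A/cnj e + (A/cnj e)^2)/(2*D)"
    using assms by simp
  then have "((A/e + (A/e)^2)/(2*D) + cnj ((A/e + (A/e)^2)/(2*D))) / 2
      = ((A/e + (A/e)^2 + (A/cnj e + (A/cnj e)^2)) / 4) / D"
    using assms by (simp add: field_simps)
  also have "\<dots> = A^4 / (D * (e * cnj e)^2)"
    using keyRe[OF assms(1) ce assms(5)] by simp
  finally show ?thesis .
qed

context
  fixes E :: "complex \<Rightarrow> complex"
  assumes HB: "hermite_biehler E" and noreal: "\<forall>x::real. E (of_real x) \<noteq> 0"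
begin

lemmas hb = hb_basic[OF HB noreal]

definition "U' = {z. E z \<noteq> 0} \<inter> {z. Im z > -1}"

lemma U'_props: "open U'" "{z. Im z \<ge> 0} \<subseteq> U'" "open {z. E z \<noteq> 0}" "U' \<subseteq> {z. E z \<noteq> 0}"
  "\<And>z. z \<in> U' \<Longrightarrow> z + \<i> \<noteq> 0"
proof -
  have cE: "continuous_on UNIV E" using hb(1) holomorphic_on_imp_continuous_on by blast
  show o: "open {z. E z \<noteq> 0}" by (rule open_Collect_neq[OF cE continuous_on_const])
  show "open U'" unfolding U'_def using o by (intro open_Int open_halfspace_Im_gt)
  show "{z. Im z \<ge> 0} \<subseteq> U'" unfolding U'_def using hb(8) by auto
  show "U' \<subseteq> {z. E z \<noteq> 0}" unfolding U'_def by auto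
  show "z + \<i> \<noteq> 0" if "z \<in> U'" for z
  proof
    assume "z + \<i> = 0"
    then have "z = -\<i>" by (simp add: eq_neg_iff_add_eq_0)
    then show False using that unfolding U'_def by simp
  qed
qed

lemma w_bd: "Im z \<ge> 0 \<Longrightarrow> norm ((compA E z / E z + (compA E z / E z)^2) / 2) \<le> 1"
proof -
  assume "Im z \<ge> 0"
  then have n: "norm (compA E z / E z) \<le> 1" using hb(8,9)[of z] by (simp add: norm_divide field_simps)
  have "norm (compA E z / E z + (compA E z / E z)^2) \<le> norm (compA E z / E z) + norm (compA E z / E z)^2"
    by (metis norm_power norm_triangle_ineq)
  also have "\<dots> \<le> 1 + 1" using n by (intro add_mono) (auto simp: power_le_one)
  finally show ?thesis by simp
qed

lemma zero_facts:
  assumes z: "compA E (of_real s) = 0"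
  shows "compB E (of_real s) \<noteq> 0"
    "cnj (deriv (compA E) (of_real s) / compB E (of_real s)) = deriv (compA E) (of_real s) / compB E (of_real s)"
    "hq (compA E) (of_real s) (of_real s) / E (of_real s) = \<i> * (deriv (compA E) (of_real s) / compB E (of_real s))"
    "\<And>z. z \<noteq> of_real s \<Longrightarrow> hq (compA E) (of_real s) z = compA E z / (z - of_real s)"
    "\<And>z. compA E z = (z - of_real s) * hq (compA E) (of_real s) z"
    "hq (compA E) (of_real s) holomorphic_on UNIV"
    "\<And>x::real. cnj (hq (compA E) (of_real s) (of_real x)) = hq (compA E) (of_real s) (of_real x)"
proof -
  have Es: "E (of_real s) = - \<i> * compB E (of_real s)" using hb(4)[of "of_real s"] z by simp
  show Bnz: "compB E (of_real s) \<noteq> 0" using Es noreal by auto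
  have dA: "compA E field_differentiable at (of_real s)"
    using hb(2) holomorphic_on_imp_differentiable_at by blast
  have "deriv (compA E) (of_real s) \<in> \<real>" by (rule real_deriv_real[OF dA hb(5)])
  then have "deriv (compA E) (of_real s) / compB E (of_real s) \<in> \<real>" using hb(6) by auto
  then show "cnj (deriv (compA E) (of_real s) / compB E (of_real s)) = deriv (compA E) (of_real s) / compB E (of_real s)"
    using Reals_cnj_iff by blast
  show "hq (compA E) (of_real s) (of_real s) / E (of_real s) = \<i> * (deriv (compA E) (of_real s) / compB E (of_real s))"
    using Bnz by (simp add: hq_at Es field_simps)
  show "hq (compA E) (of_real s) z = compA E z / (z - of_real s)" if "z \<noteq> of_real s" for z
    using that z by (simp add: hq_def)
  show "compA E z = (z - of_real s) * hq (compA E) (of_real s) z" for z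
    using hq_eq[of "compA E" z "of_real s"] z by simp
  show "hq (compA E) (of_real s) holomorphic_on UNIV" by (rule hq_holo[OF hb(2)]) simp
  show "cnj (hq (compA E) (of_real s) (of_real x)) = hq (compA E) (of_real s) (of_real x)" for x
    using hq_real[OF dA hb(5)] Reals_cnj_iff by blast
qed


lemma cont_real_comp: "P holomorphic_on UNIV \<Longrightarrow> continuous_on UNIV (\<lambda>x::real. P (of_real x))"
  by (rule continuous_on_compose2[OF holomorphic_on_imp_continuous_on]) (auto intro: continuous_intros)

lemma meas_F:
  assumes "P1 holomorphic_on UNIV" "P2 holomorphic_on UNIV"
  shows "(\<lambda>x::real. P1 (of_real x) * cnj (P2 (of_real x)) / complex_of_real ((norm (E (of_real x)))^4))
          \<in> borel_measurable lborel"
proof -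
  have "continuous_on UNIV (\<lambda>x::real. P1 (of_real x) * cnj (P2 (of_real x)) / complex_of_real ((norm (E (of_real x)))^4))"
    using noreal
    by (intro continuous_intros cont_real_comp assms hb(1)) auto
  then show ?thesis using borel_measurable_continuous_onI by simp
qed

lemma meas_N:
  assumes "P holomorphic_on UNIV"
  shows "(\<lambda>x::real. complex_of_real ((norm (P (of_real x)))^2 / (norm (E (of_real x)))^4))
          \<in> borel_measurable lborel"
proof -
  have "continuous_on UNIV (\<lambda>x::real. complex_of_real ((norm (P (of_real x)))^2 / (norm (E (of_real x)))^4))"
    using noreal
    by (intro continuous_intros cont_real_comp assms hb(1)) auto
  then show ?thesis using borel_measurable_continuous_onI by simp
qed

lemma norm4: "complex_of_real ((norm e)^4) = (e * cnj e)^2"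
proof -
  have "complex_of_real ((norm e)^4) = (complex_of_real ((norm e)^2))^2" by simp
  then show ?thesis by (simp only: complex_norm_square)
qed

lemma Areal: "cnj (compA E (of_real x)) = compA E (of_real x)"
  using hb(5) Reals_cnj_iff by blast

lemma Qfun_eq: "compA E (of_real s) = 0 \<Longrightarrow> Qfun E s = (\<lambda>z. compA E z * hq (compA E) (of_real s) z)"
  by (auto simp: Qfun_def hq_def power2_eq_square)

lemma Pfun_eq: "compA E (of_real s) = 0 \<Longrightarrow> Pfun E s = (\<lambda>z. (hq (compA E) (of_real s) z)^2)"
  by (auto simp: Pfun_def hq_def power_divide)

lemma case_QQ:
  assumes zk: "compA E (of_real sk) = 0" and zl: "compA E (of_real sl) = 0" and ne: "sk \<noteq> sl"
  shows "inner_E2 E (Qfun E sk) (Qfun E sl) = 0"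
proof -
  define A where "A = compA E"
  define hk where "hk = hq A (of_real sk)"
  define hl where "hl = hq A (of_real sl)"
  note fk0 = zero_facts[OF zk] and fl0 = zero_facts[OF zl]
  have hkh: "hk holomorphic_on UNIV" unfolding hk_def A_def by (rule fk0(6))
  have hlh: "hl holomorphic_on UNIV" unfolding hl_def A_def by (rule fl0(6))
  have hkz: "hk z = A z / (z - of_real sk)" if "z \<noteq> of_real sk" for z
    unfolding hk_def A_def using fk0(4)[OF that] .
  have hlz: "hl z = A z / (z - of_real sl)" if "z \<noteq> of_real sl" for z
    unfolding hl_def A_def using fl0(4)[OF that] .
  define d :: complex where "d = of_real sk - of_real sl"
  have dnz: "d \<noteq> 0" using ne by (simp add: d_def)
  define H2 where "H2 = (\<lambda>z. ((hk z / E z - hl z / E z) / d + (hk z / E z) * (hl z / E z)) / 2)"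
  define G where "G = (\<lambda>z. (A z / E z + (A z / E z)^2) / (2 * ((z - of_real sk) * (z - of_real sl))))"
  define F where "F = (\<lambda>x::real. Qfun E sk (of_real x) * cnj (Qfun E sl (of_real x)) / complex_of_real ((norm (E (of_real x)))^4))"
  have holo: "H2 holomorphic_on U'"
    unfolding H2_def using U'_props(4) dnz
    by (intro holomorphic_intros holomorphic_on_subset[OF hkh] holomorphic_on_subset[OF hlh]
        holomorphic_on_subset[OF hb(1)]) auto
  have HG: "H2 z = G z" if "z \<noteq> of_real sk" "z \<noteq> of_real sl" "E z \<noteq> 0" for z
  proof -
    have "H2 z = ((A z/(z - of_real sk)/E z - A z/(z - of_real sl)/E z)/((z - of_real sl) - (z - of_real sk))
          + (A z/(z - of_real sk)/E z)*(A z/(z - of_real sl)/E z))/2"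
      unfolding H2_def d_def using that hkz hlz by simp
    also have "\<dots> = G z"
      unfolding G_def using that ne by (intro alg_QQ) auto
    finally show ?thesis .
  qed
  define R0 where "R0 = 2 * (\<bar>sk\<bar> + \<bar>sl\<bar>) + 1"
  have bd: "norm (H2 z) \<le> 4 / (norm z)^2" if z: "Im z \<ge> 0" "norm z \<ge> R0" for z
  proof -
    have b1: "2 * norm (of_real sk :: complex) + 1 \<le> norm z" "2 * norm (of_real sl :: complex) + 1 \<le> norm z"
      using z R0_def by auto
    note i1 = inv_bd[OF b1(1)] and i2 = inv_bd[OF b1(2)]
    have Ez: "E z \<noteq> 0" using hb(8) z by auto
    have "H2 z = ((A z / E z + (A z / E z)^2) / 2) * (1 / (z - of_real sk)) * (1 / (z - of_real sl))"
    proof -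
      have "z - of_real sk \<noteq> 0" "z - of_real sl \<noteq> 0" using i1(2) i2(2) by auto
      then show ?thesis unfolding HG[OF i1(2) i2(2) Ez] G_def by (simp add: field_simps)
    qed
    then have "norm (H2 z) = norm ((A z / E z + (A z / E z)^2) / 2) * norm (1 / (z - of_real sk)) * norm (1 / (z - of_real sl))"
      by (metis norm_mult)
    also have "\<dots> \<le> 1 * (2 / norm z) * (2 / norm z)"
      using w_bd[OF z(1)] i1(1) i2(1) unfolding A_def
      by (intro mult_mono) auto
    also have "\<dots> = 4 / (norm z)^2" by (simp add: power2_eq_square)
    finally show ?thesis .
  qed
  have R0pos: "R0 > 0" unfolding R0_def by simp
  have FG: "F x = (G (of_real x) + cnj (G (of_real x))) / 2" if x: "x \<notin> {sk, sl}" for x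
  proof -
    have xk: "(of_real x :: complex) \<noteq> of_real sk" and xl: "(of_real x :: complex) \<noteq> of_real sl" using x by auto
    have Ex: "E (of_real x) \<noteq> 0" using noreal by auto
    have "(G (of_real x) + cnj (G (of_real x))) / 2
       = A (of_real x)^4 / (((of_real x - of_real sk) * (of_real x - of_real sl)) * (E (of_real x) * cnj (E (of_real x)))^2)"
      unfolding G_def
      by (rule FG_real[OF Ex]) (use xk xl hb(7) in \<open>auto simp: A_def Areal\<close>)
    also have "\<dots> = F x"
      unfolding F_def Qfun_def norm4 using xk xl
      by (simp add: A_def Areal field_simps power2_eq_square power4_eq_xxxx)
    finally show ?thesis by simp
  qed
  have Fm: "F \<in> borel_measurable lborel"
    unfolding F_def Qfun_eq[OF zk] Qfun_eq[OF zl]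
    by (rule meas_F) (intro holomorphic_intros hb(2) fk0(6) fl0(6))+
  have res: "integral\<^sup>L lborel F = - (0::complex) * complex_of_real pi"
    by (rule assemble(2)[where Pp="\<lambda>_. 0" and S="{sk,sl}", OF U'_props(1,2) holo _ R0pos bd Fm _ _ _ _ FG])
       (use HG hb(8) in \<open>auto\<close>)
  then show ?thesis unfolding inner_E2_def F_def by simp
qed


lemma sqrt_int_sq:
  fixes P :: "complex \<Rightarrow> complex"
  shows "complex_of_real ((norm_E2 E P)^2) =
    integral\<^sup>L lborel (\<lambda>x::real. complex_of_real ((norm (P (of_real x)))^2 / (norm (E (of_real x)))^4))"
proof -
  have "integral\<^sup>L lborel (\<lambda>x::real. (norm (P (of_real x)))^2 / (norm (E (of_real x)))^4) \<ge> 0"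
    by (intro integral_nonneg_AE AE_I2) auto
  then have "(norm_E2 E P)^2 = integral\<^sup>L lborel (\<lambda>x::real. (norm (P (of_real x)))^2 / (norm (E (of_real x)))^4)"
    unfolding norm_E2_def by simp
  then show ?thesis by (simp only: integral_complex_of_real)
qed

lemma case_QN:
  assumes zk: "compA E (of_real s) = 0"
  shows "complex_of_real ((norm_E2 E (Qfun E s))^2) =
            - (of_real pi / 2) * (deriv (compA E) (of_real s) / compB E (of_real s))"
proof -
  define A where "A = compA E"
  define h where "h = hq A (of_real s)"
  define a where "a = deriv (compA E) (of_real s) / compB E (of_real s)"
  note fk0 = zero_facts[OF zk]
  have hh: "h holomorphic_on UNIV" unfolding h_def A_def by (rule fk0(6))
  have hz: "h z = A z / (z - of_real s)" if "z \<noteq> of_real s" for z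
    unfolding h_def A_def using fk0(4)[OF that] .
  have ca: "cnj a = a" unfolding a_def by (rule fk0(2))
  define v where "v = (\<lambda>z. h z / E z)"
  have vs: "v (of_real s) = \<i> * a" unfolding v_def h_def A_def a_def by (rule fk0(3))
  have vh: "v holomorphic_on {z. E z \<noteq> 0}" unfolding v_def
    by (intro holomorphic_intros holomorphic_on_subset[OF hh] holomorphic_on_subset[OF hb(1)]) auto
  define Dv where "Dv = hq v (of_real s)"
  have Dvh: "Dv holomorphic_on {z. E z \<noteq> 0}" unfolding Dv_def by (rule hq_holo[OF vh U'_props(3)])
  have Dvz: "Dv z = (v z - \<i> * a) / (z - of_real s)" if "z \<noteq> of_real s" for z
    using that vs by (simp add: Dv_def hq_def)
  define H2 where "H2 = (\<lambda>z. Dv z / 2 + (v z)^2 / 2 + \<i> * (a/2) / (z + \<i>))"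
  define G where "G = (\<lambda>z. (A z / E z + (A z / E z)^2) / (2 * (z - of_real s)^2))"
  define Pp where "Pp = (\<lambda>z. - (\<i> * a / 2) / (z - of_real s))"
  define F where "F = (\<lambda>x::real. complex_of_real ((norm (Qfun E s (of_real x)))^2 / (norm (E (of_real x)))^4))"
  have holo: "H2 holomorphic_on U'"
    unfolding H2_def using U'_props(4,5)
    by (intro holomorphic_intros holomorphic_on_subset[OF Dvh] holomorphic_on_subset[OF vh]) auto
  have HG: "H2 z = G z + Pp z + \<i> * (a/2) / (z + \<i>)" if "z \<noteq> of_real s" "E z \<noteq> 0" for z
  proof -
    have t: "z - of_real s \<noteq> 0" using that by simp
    show ?thesis unfolding H2_def G_def Pp_def Dvz[OF that(1)] v_def hz[OF that(1)]
      by (rule alg_QN) (use t that(2) in auto)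
  qed
  define R0 where "R0 = 2 * \<bar>s\<bar> + 3"
  define K where "K = 4 + 4 * norm (\<i> * a / 2 * (of_real s + \<i>))"
  have bd: "norm (H2 z) \<le> K / (norm z)^2" if z: "Im z \<ge> 0" "norm z \<ge> R0" for z
  proof -
    have b1: "2 * norm (of_real s :: complex) + 1 \<le> norm z" "2 * norm (-\<i>) + 1 \<le> norm z"
      using z R0_def by auto
    note i1 = inv_bd[OF b1(1)] and i2 = inv_bd[OF b1(2)]
    have Ez: "E z \<noteq> 0" using hb(8) z by auto
    have t1: "z - of_real s \<noteq> 0" using i1(2) by simp
    have "z - (-\<i>) \<noteq> 0" using i2(2) by (metis eq_iff_diff_eq_0)
    then have t2: "z + \<i> \<noteq> 0" by simp
    note t = t1 t2
    have i2': "norm (1 / (z + \<i>)) \<le> 2 / norm z" using i2(1) by simp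
    have "H2 z = ((A z / E z + (A z / E z)^2) / 2) / (z - of_real s)^2 + Pp z + \<i> * (a/2) / (z + \<i>)"
      unfolding HG[OF i1(2) Ez] G_def by simp
    also have "\<dots> = ((A z / E z + (A z / E z)^2) / 2) * (1 / (z - of_real s)) * (1 / (z - of_real s))
        + (- (\<i> * a / 2 * ((z + \<i>) - (z - of_real s)))) * (1 / (z + \<i>)) * (1 / (z - of_real s))"
      unfolding Pp_def by (rule alg_QNb) (use t in auto)
    also have "(z + \<i>) - (z - of_real s) = of_real s + \<i>" by simp
    finally have "H2 z = ((A z / E z + (A z / E z)^2) / 2) * (1 / (z - of_real s)) * (1 / (z - of_real s))
        + (- (\<i> * a / 2 * (of_real s + \<i>))) * (1 / (z + \<i>)) * (1 / (z - of_real s))" .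
    note hH = this
    have "norm (H2 z) \<le> norm ((A z / E z + (A z / E z)^2) / 2) * norm (1 / (z - of_real s)) * norm (1 / (z - of_real s))
        + norm (\<i> * a / 2 * (of_real s + \<i>)) * norm (1 / (z + \<i>)) * norm (1 / (z - of_real s))"
      unfolding hH by (rule order.trans[OF norm_triangle_ineq]) (simp only: norm_mult norm_minus_cancel order.refl)
    also have "\<dots> \<le> 1 * (2 / norm z) * (2 / norm z) + norm (\<i> * a / 2 * (of_real s + \<i>)) * (2 / norm z) * (2 / norm z)"
      using w_bd[OF z(1)] i1(1) i2' unfolding A_def
      by (intro add_mono mult_mono) auto
    also have "\<dots> = K / (norm z)^2" using i1(3) by (simp add: K_def power2_eq_square field_simps) (simp add: add_divide_distrib)
    finally show ?thesis .
  qed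
  have R0pos: "R0 > 0" unfolding R0_def by simp
  have FG: "F x = (G (of_real x) + cnj (G (of_real x))) / 2" if x: "x \<notin> {s}" for x
  proof -
    have xk: "(of_real x :: complex) \<noteq> of_real s" using x by auto
    have Ex: "E (of_real x) \<noteq> 0" using noreal by auto
    have "(G (of_real x) + cnj (G (of_real x))) / 2
       = A (of_real x)^4 / ((of_real x - of_real s)^2 * (E (of_real x) * cnj (E (of_real x)))^2)"
      unfolding G_def
      by (rule FG_real[OF Ex]) (use xk hb(7) in \<open>auto simp: A_def Areal\<close>)
    also have "\<dots> = F x"
      unfolding F_def Qfun_def of_real_divide norm4 complex_norm_square using xk
      by (simp add: A_def Areal field_simps power2_eq_square power4_eq_xxxx)
    finally show ?thesis by simp
  qed
  have Fm: "F \<in> borel_measurable lborel"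
    unfolding F_def Qfun_eq[OF zk]
    by (rule meas_N) (intro holomorphic_intros hb(2) fk0(6))
  have Pc: "cnj (Pp (of_real x)) = - Pp (of_real x)" for x
    unfolding Pp_def using ca by simp
  have eqx: "H2 (of_real x) = G (of_real x) + Pp (of_real x) + \<i> * (a/2) / (of_real x + \<i>)" if "x \<notin> {s}" for x
    using HG[of "of_real x"] hb(8)[of "of_real x"] that by simp
  have Kpos: "K \<ge> 0" unfolding K_def by simp
  have res: "integral\<^sup>L lborel F = - (a/2) * complex_of_real pi"
    by (rule assemble(2)[where S="{s}", OF U'_props(1,2) holo Kpos R0pos bd Fm _ eqx Pc _ FG]) (use ca in auto)
  show ?thesis unfolding sqrt_int_sq F_def[symmetric] res a_def by (simp add: field_simps)
qed


lemma case_PP: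
  assumes zk: "compA E (of_real sk) = 0" and zl: "compA E (of_real sl) = 0" and ne: "sk \<noteq> sl"
  shows "inner_E2 E (Pfun E sk) (Pfun E sl) =
              - (deriv (compA E) (of_real sk) / compB E (of_real sk)
                 + deriv (compA E) (of_real sl) / compB E (of_real sl))
                * of_real pi / (2 * (of_real sk - of_real sl)^2)"
proof -
  define A where "A = compA E"
  define hk where "hk = hq A (of_real sk)"
  define hl where "hl = hq A (of_real sl)"
  define ak where "ak = deriv (compA E) (of_real sk) / compB E (of_real sk)"
  define al where "al = deriv (compA E) (of_real sl) / compB E (of_real sl)"
  note fk0 = zero_facts[OF zk] and fl0 = zero_facts[OF zl]
  have hkh: "hk holomorphic_on UNIV" unfolding hk_def A_def by (rule fk0(6))
  have hlh: "hl holomorphic_on UNIV" unfolding hl_def A_def by (rule fl0(6))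
  have hkz: "hk z = A z / (z - of_real sk)" if "z \<noteq> of_real sk" for z
    unfolding hk_def A_def using fk0(4)[OF that] .
  have hlz: "hl z = A z / (z - of_real sl)" if "z \<noteq> of_real sl" for z
    unfolding hl_def A_def using fl0(4)[OF that] .
  have cak: "cnj ak = ak" unfolding ak_def by (rule fk0(2))
  have cal: "cnj al = al" unfolding al_def by (rule fl0(2))
  define vk where "vk = (\<lambda>z. hk z / E z)"
  define vl where "vl = (\<lambda>z. hl z / E z)"
  have vks: "vk (of_real sk) = \<i> * ak" unfolding vk_def hk_def A_def ak_def by (rule fk0(3))
  have vls: "vl (of_real sl) = \<i> * al" unfolding vl_def hl_def A_def al_def by (rule fl0(3))
  have vkh: "vk holomorphic_on {z. E z \<noteq> 0}" unfolding vk_def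
    by (intro holomorphic_intros holomorphic_on_subset[OF hkh] holomorphic_on_subset[OF hb(1)]) auto
  have vlh: "vl holomorphic_on {z. E z \<noteq> 0}" unfolding vl_def
    by (intro holomorphic_intros holomorphic_on_subset[OF hlh] holomorphic_on_subset[OF hb(1)]) auto
  define Dvk where "Dvk = hq vk (of_real sk)"
  define Dvl where "Dvl = hq vl (of_real sl)"
  have Dvkh: "Dvk holomorphic_on {z. E z \<noteq> 0}" unfolding Dvk_def by (rule hq_holo[OF vkh U'_props(3)])
  have Dvlh: "Dvl holomorphic_on {z. E z \<noteq> 0}" unfolding Dvl_def by (rule hq_holo[OF vlh U'_props(3)])
  have Dvkz: "Dvk z = (vk z - \<i> * ak) / (z - of_real sk)" if "z \<noteq> of_real sk" for z
    using that vks by (simp add: Dvk_def hq_def)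
  have Dvlz: "Dvl z = (vl z - \<i> * al) / (z - of_real sl)" if "z \<noteq> of_real sl" for z
    using that vls by (simp add: Dvl_def hq_def)
  define d :: complex where "d = of_real sk - of_real sl"
  have dnz: "d \<noteq> 0" using ne by (simp add: d_def)
  define c where "c = (ak + al) / (2 * d^2)"
  define H2 where "H2 = (\<lambda>z. (((Dvk z + Dvl z)/d^2 - 2*(vk z - vl z)/d^3 + ((vk z - vl z)/d)^2)/2) + \<i> * c / (z + \<i>))"
  define G where "G = (\<lambda>z. (A z / E z + (A z / E z)^2) / (2 * ((z - of_real sk)^2 * (z - of_real sl)^2)))"
  define Pp where "Pp = (\<lambda>z. - (\<i>*ak/(2*d^2))/(z - of_real sk) - (\<i>*al/(2*d^2))/(z - of_real sl))"
  define F where "F = (\<lambda>x::real. Pfun E sk (of_real x) * cnj (Pfun E sl (of_real x)) / complex_of_real ((norm (E (of_real x)))^4))"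
  have holo: "H2 holomorphic_on U'"
    unfolding H2_def using U'_props(4,5) dnz
    by (intro holomorphic_intros holomorphic_on_subset[OF Dvkh] holomorphic_on_subset[OF Dvlh]
        holomorphic_on_subset[OF vkh] holomorphic_on_subset[OF vlh]) auto
  have HG: "H2 z = G z + Pp z + \<i> * c / (z + \<i>)" if "z \<noteq> of_real sk" "z \<noteq> of_real sl" "E z \<noteq> 0" for z
  proof -
    have dd: "d = (z - of_real sl) - (z - of_real sk)" by (simp add: d_def)
    have "H2 z - \<i> * c / (z + \<i>) = (((((A z/(z - of_real sk)/E z) - \<i>*ak)/(z - of_real sk) + ((A z/(z - of_real sl)/E z) - \<i>*al)/(z - of_real sl))/((z - of_real sl) - (z - of_real sk))^2
          - 2*((A z/(z - of_real sk)/E z) - (A z/(z - of_real sl)/E z))/((z - of_real sl) - (z - of_real sk))^3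
          + ((A z/(z - of_real sk)/E z - A z/(z - of_real sl)/E z)/((z - of_real sl) - (z - of_real sk)))^2)/2)"
      unfolding H2_def Dvkz[OF that(1)] Dvlz[OF that(2)] vk_def vl_def hkz[OF that(1)] hlz[OF that(2)] dd[symmetric]
      by simp
    also have "\<dots> = (A z/E z + (A z/E z)^2)/(2*((z - of_real sk)^2*(z - of_real sl)^2))
        + (- (\<i>*ak/(2*((z - of_real sl) - (z - of_real sk))^2))/(z - of_real sk)
           - (\<i>*al/(2*((z - of_real sl) - (z - of_real sk))^2))/(z - of_real sl))"
      by (rule alg_PP) (use that ne in auto)
    also have "\<dots> = G z + Pp z"
      by (simp only: dd[symmetric] G_def Pp_def)
    finally show ?thesis by (simp add: algebra_simps)
  qed
  define R0 where "R0 = 2 * (\<bar>sk\<bar> + \<bar>sl\<bar>) + 3"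
  define Mk where "Mk = \<i>*ak/(2*d^2)*(of_real sk + \<i>)"
  define Ml where "Ml = \<i>*al/(2*d^2)*(of_real sl + \<i>)"
  define K where "K = 16 + 4 * norm Mk + 4 * norm Ml"
  have bd: "norm (H2 z) \<le> K / (norm z)^2" if z: "Im z \<ge> 0" "norm z \<ge> R0" for z
  proof -
    have b1: "2 * norm (of_real sk :: complex) + 1 \<le> norm z" "2 * norm (of_real sl :: complex) + 1 \<le> norm z"
       "2 * norm (-\<i>) + 1 \<le> norm z"
      using z R0_def by auto
    note i1 = inv_bd[OF b1(1)] and i2 = inv_bd[OF b1(2)] and i3 = inv_bd[OF b1(3)]
    have Ez: "E z \<noteq> 0" using hb(8) z by auto
    have t1: "z - of_real sk \<noteq> 0" using i1(2) by simp
    have t2: "z - of_real sl \<noteq> 0" using i2(2) by simp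
    have "z - (-\<i>) \<noteq> 0" using i3(2) by (metis eq_iff_diff_eq_0)
    then have t3: "z + \<i> \<noteq> 0" by simp
    have i3': "norm (1 / (z + \<i>)) \<le> 2 / norm z" using i3(1) by simp
    define W where "W = (A z / E z + (A z / E z)^2) / 2"
    have "H2 z = W / ((z - of_real sk)^2 * (z - of_real sl)^2) + Pp z + \<i> * ((ak + al) / (2 * d^2)) / (z + \<i>)"
      unfolding HG[OF i1(2) i2(2) Ez] G_def W_def c_def by simp
    also have "\<dots> = W*(1/(z - of_real sk))*(1/(z - of_real sk))*(1/(z - of_real sl))*(1/(z - of_real sl))
       + (- (\<i>*ak/(2*d^2)*((z + \<i>) - (z - of_real sk))))*(1/(z + \<i>))*(1/(z - of_real sk))
       + (- (\<i>*al/(2*d^2)*((z + \<i>) - (z - of_real sl))))*(1/(z + \<i>))*(1/(z - of_real sl))"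
      unfolding Pp_def by (rule alg_PPb) (use t1 t2 t3 dnz in auto)
    finally have hH0: "H2 z = W*(1/(z - of_real sk))*(1/(z - of_real sk))*(1/(z - of_real sl))*(1/(z - of_real sl))
       + (- (\<i>*ak/(2*d^2)*((z + \<i>) - (z - of_real sk))))*(1/(z + \<i>))*(1/(z - of_real sk))
       + (- (\<i>*al/(2*d^2)*((z + \<i>) - (z - of_real sl))))*(1/(z + \<i>))*(1/(z - of_real sl))" .
    have e3: "(z + \<i>) - (z - of_real sk) = of_real sk + \<i>" "(z + \<i>) - (z - of_real sl) = of_real sl + \<i>" by simp_all
    have hH: "H2 z = W*(1/(z - of_real sk))*(1/(z - of_real sk))*(1/(z - of_real sl))*(1/(z - of_real sl))
       + (- Mk)*(1/(z + \<i>))*(1/(z - of_real sk)) + (- Ml)*(1/(z + \<i>))*(1/(z - of_real sl))"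
      using hH0 unfolding e3 Mk_def Ml_def .
    have "norm (H2 z) \<le> norm W * norm (1/(z - of_real sk)) * norm (1/(z - of_real sk)) * norm (1/(z - of_real sl)) * norm (1/(z - of_real sl))
       + norm Mk * norm (1/(z + \<i>)) * norm (1/(z - of_real sk)) + norm Ml * norm (1/(z + \<i>)) * norm (1/(z - of_real sl))"
      unfolding hH
      by (rule order.trans[OF norm_triangle_ineq], rule add_mono[OF order.trans[OF norm_triangle_ineq]])
         (simp_all only: norm_mult norm_minus_cancel order.refl)
    also have "\<dots> \<le> 1 * (2 / norm z) * (2 / norm z) * 2 * 2 + norm Mk * (2 / norm z) * (2 / norm z) + norm Ml * (2 / norm z) * (2 / norm z)"
    proof -
      have two: "2 / norm z \<le> 2" using i1(3) by (simp add: divide_le_eq)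
      show ?thesis
        using w_bd[OF z(1)] i1(1) i2(1) i3' two unfolding W_def A_def
        by (intro add_mono mult_mono) (auto intro: order.trans)
    qed
    also have "\<dots> = K / (norm z)^2" using i1(3)
      by (simp add: K_def power2_eq_square field_simps) (simp add: add_divide_distrib)
    finally show ?thesis .
  qed
  have R0pos: "R0 > 0" unfolding R0_def by simp
  have FG: "F x = (G (of_real x) + cnj (G (of_real x))) / 2" if x: "x \<notin> {sk, sl}" for x
  proof -
    have xk: "(of_real x :: complex) \<noteq> of_real sk" and xl: "(of_real x :: complex) \<noteq> of_real sl" using x by auto
    have Ex: "E (of_real x) \<noteq> 0" using noreal by auto
    have "(G (of_real x) + cnj (G (of_real x))) / 2
       = A (of_real x)^4 / (((of_real x - of_real sk)^2 * (of_real x - of_real sl)^2) * (E (of_real x) * cnj (E (of_real x)))^2)"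
      unfolding G_def
      by (rule FG_real[OF Ex]) (use xk xl hb(7) in \<open>auto simp: A_def Areal\<close>)
    also have "\<dots> = F x"
      unfolding F_def Pfun_def norm4 using xk xl
      by (simp add: A_def Areal field_simps power2_eq_square power4_eq_xxxx)
    finally show ?thesis by simp
  qed
  have Fm: "F \<in> borel_measurable lborel"
    unfolding F_def Pfun_eq[OF zk] Pfun_eq[OF zl]
    by (rule meas_F) (intro holomorphic_intros hb(2) fk0(6) fl0(6))+
  have Pc: "cnj (Pp (of_real x)) = - Pp (of_real x)" if "x \<notin> {sk, sl}" for x
    unfolding Pp_def using cak cal by (simp add: d_def)
  have eqx: "H2 (of_real x) = G (of_real x) + Pp (of_real x) + \<i> * c / (of_real x + \<i>)" if "x \<notin> {sk, sl}" for x
    using HG[of "of_real x"] hb(8)[of "of_real x"] that by simp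
  have Kpos: "K \<ge> 0" unfolding K_def by simp
  have cc: "cnj c = c" unfolding c_def d_def using cak cal by simp
  have res: "integral\<^sup>L lborel F = - c * complex_of_real pi"
    by (rule assemble(2)[where S="{sk, sl}", OF U'_props(1,2) holo Kpos R0pos bd Fm _ eqx Pc cc FG]) auto
  have dnz': "(of_real sk - of_real sl :: complex) \<noteq> 0" using dnz d_def by simp
  show ?thesis unfolding inner_E2_def F_def[symmetric] res c_def ak_def al_def d_def
    using fk0(1) fl0(1) dnz' by (simp add: field_simps)
qed


lemma case_PN:
  assumes zk: "compA E (of_real s) = 0"
  shows "complex_of_real ((norm_E2 E (Pfun E s))^2) =
            - (of_real pi / 2) *
              ((deriv (compA E) (of_real s) / compB E (of_real s))^3
               + (1/6) * (deriv ^^ 3) (\<lambda>z. compA E z / compB E z) (of_real s))"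
proof -
  define A where "A = compA E"
  define B where "B = compB E"
  define s' :: complex where "s' = of_real s"
  note fk0 = zero_facts[OF zk]
  define V where "V = {z. B z \<noteq> 0}"
  have oV: "open V" unfolding V_def B_def
    by (rule open_Collect_neq[OF holomorphic_on_imp_continuous_on[OF hb(3)] continuous_on_const])
  have sV: "s' \<in> V" unfolding V_def B_def s'_def using fk0(1) by simp
  define f where "f = (\<lambda>z. compA E z / compB E z)"
  have fh: "f holomorphic_on V" unfolding f_def V_def B_def
    by (intro holomorphic_intros holomorphic_on_subset[OF hb(2)] holomorphic_on_subset[OF hb(3)]) auto
  define u1 where "u1 = hq f s'"
  define u2 where "u2 = hq u1 s'"
  define u3 where "u3 = hq u2 s'"
  define u4 where "u4 = hq u3 s'"
  have u1h: "u1 holomorphic_on V" unfolding u1_def by (rule hq_holo[OF fh oV])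
  have u2h: "u2 holomorphic_on V" unfolding u2_def by (rule hq_holo[OF u1h oV])
  have u3h: "u3 holomorphic_on V" unfolding u3_def by (rule hq_holo[OF u2h oV])
  have u4h: "u4 holomorphic_on V" unfolding u4_def by (rule hq_holo[OF u3h oV])
  have fs: "f s' = 0" unfolding f_def s'_def using zk by simp
  define a where "a = u1 s'"
  define b where "b = u2 s'"
  define c3 where "c3 = u3 s'"
  have ef: "f z = (z - s') * u1 z" for z using hq_eq[of f z s'] fs unfolding u1_def by simp
  have e1: "u1 z = a + (z - s') * u2 z" for z using hq_eq[of u1 z s'] unfolding u2_def a_def by simp
  have e2: "u2 z = b + (z - s') * u3 z" for z using hq_eq[of u2 z s'] unfolding u3_def b_def by simp
  have e3: "u3 z = c3 + (z - s') * u4 z" for z using hq_eq[of u3 z s'] unfolding u4_def c3_def by simp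
  have dfs: "\<And>g. g holomorphic_on V \<Longrightarrow> g field_differentiable at s'"
    using holomorphic_on_imp_differentiable_at[OF _ oV sV] by blast
  have fR: "f (of_real x) \<in> \<real>" for x unfolding f_def using hb(5,6) by auto
  have u1R: "u1 (of_real x) \<in> \<real>" for x unfolding u1_def s'_def by (rule hq_real[OF dfs[OF fh, unfolded s'_def] fR])
  have u2R: "u2 (of_real x) \<in> \<real>" for x unfolding u2_def s'_def by (rule hq_real[OF dfs[OF u1h, unfolded s'_def] u1R])
  have u3R: "u3 (of_real x) \<in> \<real>" for x unfolding u3_def s'_def by (rule hq_real[OF dfs[OF u2h, unfolded s'_def] u2R])
  have ca: "cnj a = a" unfolding a_def s'_def using u1R Reals_cnj_iff by blast
  have cb: "cnj b = b" unfolding b_def s'_def using u2R Reals_cnj_iff by blast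
  have cc3: "cnj c3 = c3" unfolding c3_def s'_def using u3R Reals_cnj_iff by blast
  have a_eq: "a = deriv (compA E) s' / compB E s'"
  proof -
    have dA: "DERIV (compA E) s' :> deriv (compA E) s'"
      using hb(2) holomorphic_on_imp_differentiable_at DERIV_deriv_iff_field_differentiable by blast
    have dB: "DERIV (compB E) s' :> deriv (compB E) s'"
      using hb(3) holomorphic_on_imp_differentiable_at DERIV_deriv_iff_field_differentiable by blast
    have "DERIV f s' :> (deriv (compA E) s' * compB E s' - compA E s' * deriv (compB E) s') / (compB E s' * compB E s')"
      unfolding f_def by (rule DERIV_divide[OF dA dB]) (use fk0(1) s'_def in simp)
    then have "deriv f s' = deriv (compA E) s' / compB E s'"
      using zk fk0(1) unfolding s'_def by (auto dest!: DERIV_imp_deriv simp: field_simps)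
    then show ?thesis unfolding a_def u1_def by (simp add: hq_at)
  qed
  have c3_eq: "(deriv ^^ 3) (\<lambda>z. compA E z / compB E z) s' = 6 * c3"
  proof -
    have "(deriv ^^ 3) f s' = 6 * deriv u2 s'"
      by (rule third_deriv[OF oV sV u1h u2h]) (use ef e1 in auto)
    then show ?thesis unfolding f_def c3_def u3_def by (simp add: hq_at)
  qed
  define c where "c = (c3 + a^3) / 2"
  define G where "G = (\<lambda>z. (A z / E z + (A z / E z)^2) / (2 * (z - s')^4))"
  define Pt where "Pt = (\<lambda>z. (\<i>/2)*(a/(z - s')^3 + b/(z - s')^2 + (c3 + a^3)/(z - s')))"
  define rho where "rho = (\<lambda>z. (\<i>/2)*(u4 z + 3*a^2*u2 z + 3*a*(z - s')*(u2 z)^2 + (z - s')^2*(u2 z)^3)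
       + (\<i>/2)*(u1 z)^4*(f z - 2*\<i>)/(1 + \<i>*f z)^2)"
  define f0 where "f0 = (\<lambda>z. G z - Pt z + \<i> * c / (z + \<i>))"
  define L where "L = rho s' + \<i> * c / (s' + \<i>)"
  define H2 where "H2 = (\<lambda>z. if z = s' then L else f0 z)"
  have Grho: "G z - Pt z = rho z" if "z \<in> V" "E z \<noteq> 0" "z \<noteq> s'" for z
  proof -
    have Bz: "B z \<noteq> 0" using that V_def by simp
    have Ez: "A z - \<i> * B z \<noteq> 0" using that hb(4)[of z] unfolding A_def B_def by simp
    note ae = AEf[OF Bz _ Ez, of "f z"]
    have fz: "f z = A z / B z" unfolding f_def A_def B_def ..
    have EE: "E z = A z - \<i> * B z" unfolding A_def B_def by (rule hb(4))
    have t: "z - s' \<noteq> 0" using that by simp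
    have "G z = (f z/(f z - \<i>) + (f z/(f z - \<i>))^2)/(2*(z - s')^4)"
      unfolding G_def EE ae(1)[OF fz] ..
    also have "\<dots> = rho z + Pt z"
      unfolding rho_def Pt_def
      by (rule alg_P[OF t ae(2)[OF fz] e3 e2 e1 ef])
    finally show ?thesis by simp
  qed
  have f0h: "f0 holomorphic_on (U' - {s'})"
    unfolding f0_def G_def Pt_def A_def using U'_props(4,5)
    by (intro holomorphic_intros holomorphic_on_subset[OF hb(2)] holomorphic_on_subset[OF hb(1)] ) auto
  have fnz: "1 + \<i> * f s' \<noteq> 0" using fs by simp
  have rhoc: "isCont rho s'"
  proof -
    have ic: "\<And>g. g holomorphic_on V \<Longrightarrow> isCont g s'"
      using dfs field_differentiable_imp_continuous_at by blast
    show ?thesis unfolding rho_def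
      by (intro continuous_intros ic u1h u2h u4h fh) (use fnz in auto)
  qed
  have oVU: "open (V \<inter> U')" using oV U'_props(1) by auto
  have sVU: "s' \<in> V \<inter> U'" using sV U'_props(2) unfolding s'_def by auto
  have lim: "f0 \<midarrow>s'\<rightarrow> L"
  proof -
    have "((\<lambda>z. rho z + \<i> * c / (z + \<i>)) \<longlongrightarrow> L) (at s')"
    proof -
      have "isCont (\<lambda>z. rho z + \<i> * c / (z + \<i>)) s'"
        using U'_props(5)[OF sVU[THEN IntD2]] by (intro continuous_intros rhoc) auto
      then show ?thesis unfolding L_def isCont_def by simp
    qed
    moreover have "eventually (\<lambda>z. rho z + \<i> * c / (z + \<i>) = f0 z) (at s')"
    proof -
      have "eventually (\<lambda>z. z \<in> V \<inter> U') (at s')"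
        using oVU sVU eventually_at_topological by blast
      moreover have "eventually (\<lambda>z. z \<noteq> s') (at s')" by (simp add: eventually_at_filter)
      ultimately show ?thesis
        by eventually_elim (use Grho U'_props(4) in \<open>auto simp: f0_def\<close>)
    qed
    ultimately show ?thesis by (rule Lim_transform_eventually)
  qed
  have holo: "H2 holomorphic_on U'"
    unfolding H2_def by (rule removable_singularity[OF f0h U'_props(1) lim])
  define R0 where "R0 = 2 * \<bar>s\<bar> + 3"
  define Ma where "Ma = -(\<i>/2)*a"
  define Mb where "Mb = -(\<i>/2)*b"
  define Mc where "Mc = -(\<i>*c*(s' + \<i>))"
  define K where "K = 16 + 8 * norm Ma + 4 * norm Mb + 4 * norm Mc"
  have bd: "norm (H2 z) \<le> K / (norm z)^2" if z: "Im z \<ge> 0" "norm z \<ge> R0" for z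
  proof -
    have b1: "2 * norm s' + 1 \<le> norm z" "2 * norm (-\<i>) + 1 \<le> norm z"
      using z R0_def s'_def by auto
    note i1 = inv_bd[OF b1(1)] and i3 = inv_bd[OF b1(2)]
    have t1: "z - s' \<noteq> 0" using i1(2) by simp
    have "z - (-\<i>) \<noteq> 0" using i3(2) by (metis eq_iff_diff_eq_0)
    then have t3: "z + \<i> \<noteq> 0" by simp
    have i3': "norm (1 / (z + \<i>)) \<le> 2 / norm z" using i3(1) by simp
    define W where "W = (A z / E z + (A z / E z)^2) / 2"
    have "H2 z = W/(z - s')^4 - (\<i>/2)*(a/(z - s')^3 + b/(z - s')^2 + (c3 + a^3)/(z - s')) + \<i>*((c3 + a^3)/2)/(z + \<i>)"
      unfolding H2_def f0_def G_def Pt_def W_def c_def using i1(2) by simp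
    also have "\<dots> = W*(1/(z - s'))*(1/(z - s'))*(1/(z - s'))*(1/(z - s')) + (-(\<i>/2)*a)*(1/(z - s'))*(1/(z - s'))*(1/(z - s'))
       + (-(\<i>/2)*b)*(1/(z - s'))*(1/(z - s')) + (-(\<i>*((c3 + a^3)/2)*((z + \<i>) - (z - s'))))*(1/(z + \<i>))*(1/(z - s'))"
      by (rule alg_PNb[OF t1 t3])
    finally have hH0: "H2 z = W*(1/(z - s'))*(1/(z - s'))*(1/(z - s'))*(1/(z - s')) + (-(\<i>/2)*a)*(1/(z - s'))*(1/(z - s'))*(1/(z - s'))
       + (-(\<i>/2)*b)*(1/(z - s'))*(1/(z - s')) + (-(\<i>*((c3 + a^3)/2)*((z + \<i>) - (z - s'))))*(1/(z + \<i>))*(1/(z - s'))" .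
    have e4: "(z + \<i>) - (z - s') = s' + \<i>" by simp
    have hH: "H2 z = W*(1/(z - s'))*(1/(z - s'))*(1/(z - s'))*(1/(z - s')) + Ma*(1/(z - s'))*(1/(z - s'))*(1/(z - s'))
       + Mb*(1/(z - s'))*(1/(z - s')) + Mc*(1/(z + \<i>))*(1/(z - s'))"
      using hH0 unfolding e4 Ma_def Mb_def Mc_def c_def .
    have "norm (H2 z) \<le> norm W*norm (1/(z - s'))*norm (1/(z - s'))*norm (1/(z - s'))*norm (1/(z - s'))
       + norm Ma*norm (1/(z - s'))*norm (1/(z - s'))*norm (1/(z - s'))
       + norm Mb*norm (1/(z - s'))*norm (1/(z - s')) + norm Mc*norm (1/(z + \<i>))*norm (1/(z - s'))"
      unfolding hH
      by (rule order.trans[OF norm_triangle_ineq], rule add_mono[OF order.trans[OF norm_triangle_ineq]],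
          rule add_mono[OF order.trans[OF norm_triangle_ineq]])
         (simp_all only: norm_mult order.refl)
    also have "\<dots> \<le> 1*(2 / norm z)*(2 / norm z)*2*2 + norm Ma*(2 / norm z)*(2 / norm z)*2
       + norm Mb*(2 / norm z)*(2 / norm z) + norm Mc*(2 / norm z)*(2 / norm z)"
    proof -
      have two: "2 / norm z \<le> 2" using i1(3) by (simp add: divide_le_eq)
      show ?thesis
        using w_bd[OF z(1)] i1(1) i3' two unfolding W_def A_def
        by (intro add_mono mult_mono) (auto intro: order.trans)
    qed
    also have "\<dots> = K / (norm z)^2" using i1(3)
      by (simp add: K_def power2_eq_square field_simps) (simp add: add_divide_distrib)
    finally show ?thesis .
  qed
  have R0pos: "R0 > 0" unfolding R0_def by simp
  define F where "F = (\<lambda>x::real. complex_of_real ((norm (Pfun E s (of_real x)))^2 / (norm (E (of_real x)))^4))"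
  have FG: "F x = (G (of_real x) + cnj (G (of_real x))) / 2" if x: "x \<notin> {s}" for x
  proof -
    have xk: "(of_real x :: complex) \<noteq> s'" using x s'_def by auto
    have Ex: "E (of_real x) \<noteq> 0" using noreal by auto
    have "(G (of_real x) + cnj (G (of_real x))) / 2
       = A (of_real x)^4 / ((of_real x - s')^4 * (E (of_real x) * cnj (E (of_real x)))^2)"
      unfolding G_def
      by (rule FG_real[OF Ex]) (use xk hb(7) s'_def in \<open>auto simp: A_def Areal\<close>)
    also have "\<dots> = F x"
      unfolding F_def Pfun_def of_real_divide norm4 complex_norm_square using xk s'_def
      by (simp add: A_def Areal field_simps power2_eq_square power4_eq_xxxx)
    finally show ?thesis by simp
  qed
  have Fm: "F \<in> borel_measurable lborel"
    unfolding F_def Pfun_eq[OF zk]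
    by (rule meas_N) (intro holomorphic_intros fk0(6))
  have Pc: "cnj (- Pt (of_real x)) = - (- Pt (of_real x))" if "x \<notin> {s}" for x
    unfolding Pt_def s'_def using ca cb cc3 by simp
  have eqx: "H2 (of_real x) = G (of_real x) + (- Pt (of_real x)) + \<i> * c / (of_real x + \<i>)" if "x \<notin> {s}" for x
    using that unfolding H2_def f0_def s'_def by simp
  have Kpos: "K \<ge> 0" unfolding K_def by simp
  have cc: "cnj c = c" unfolding c_def using ca cc3 by simp
  have res: "integral\<^sup>L lborel F = - c * complex_of_real pi"
    by (rule assemble(2)[where S="{s}" and Pp="\<lambda>z. - Pt z", OF U'_props(1,2) holo Kpos R0pos bd Fm _ eqx Pc cc FG]) auto
  show ?thesis unfolding sqrt_int_sq F_def[symmetric] res c_def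
    using a_eq c3_eq unfolding s'_def by (simp add: field_simps)
qed

end


theorem lemma3:
  fixes E :: "complex \<Rightarrow> complex" and sk sl :: real
  assumes HB: "hermite_biehler E"
    and noreal: "\<forall>x::real. E (of_real x) \<noteq> 0"
    and notin: "\<not> in_H_E2 E (\<lambda>z. compA E z * compB E z)"
    and zk: "compA E (of_real sk) = 0"
    and zl: "compA E (of_real sl) = 0"
  shows "(sk \<noteq> sl \<longrightarrow>
            inner_E2 E (Pfun E sk) (Pfun E sl) =
              - (deriv (compA E) (of_real sk) / compB E (of_real sk)
                 + deriv (compA E) (of_real sl) / compB E (of_real sl))
                * of_real pi / (2 * (of_real sk - of_real sl)^2)
          \<and> inner_E2 E (Qfun E sk) (Qfun E sl) = 0)
       \<and> complex_of_real ((norm_E2 E (Pfun E sk))^2) =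
            - (of_real pi / 2) *
              ((deriv (compA E) (of_real sk) / compB E (of_real sk))^3
               + (1/6) * (deriv ^^ 3) (\<lambda>z. compA E z / compB E z) (of_real sk))
       \<and> complex_of_real ((norm_E2 E (Qfun E sk))^2) =
            - (of_real pi / 2) * (deriv (compA E) (of_real sk) / compB E (of_real sk))"
proof -
  have P: "sk \<noteq> sl \<longrightarrow>
            inner_E2 E (Pfun E sk) (Pfun E sl) =
              - (deriv (compA E) (of_real sk) / compB E (of_real sk)
                 + deriv (compA E) (of_real sl) / compB E (of_real sl))
                * of_real pi / (2 * (of_real sk - of_real sl)^2)
          \<and> inner_E2 E (Qfun E sk) (Qfun E sl) = 0"
    using case_PP[OF HB noreal zk zl] case_QQ[OF HB noreal zk zl] by blast
  show ?thesis using P case_PN[OF HB noreal zk] case_QN[OF HB noreal zk] by blast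
qed

end
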